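(* Let $X\in\mathbb{R}^{m\times n}$ with $m\geq n$, and let $X=U\Sigma V^\top$ be a singular value decomposition, where $U\in\mathbb{R}^{m\times m}$ and $V\in\mathbb{R}^{n\times n}$ satisfy $U^\top U=I$, $V^\top V=I$, and $\Sigma\in\mathbb{R}^{m\times n}$ is diagonal with diagonal entries $\sigma_i=\Sigma_{ii}$, $i=1,\dots,n$, which are nonzero and pairwise distinct in absolute value. Let $dX\in\mathbb{R}^{m\times n}$ be a variation of $X$ and $(dU,d\Sigma,dV)$ the induced variation of the SVD factors. Then $$d\Sigma=(U^\top dX\,V)_{diag},\qquad dV=2V\left(K^\top\circ(\Sigma^\top U^\top dX\, V)_{sym}\right),$$ where $K\in\mathbb{R}^{n\times n}$ is given by $K_{ij}=\frac{1}{\sigma_i^2-\sigma_j^2}$ for $i\neq j$ and $K_{ii}=0$. Moreover, writing $\Sigma_n\in\mathbb{R}^{n\times n}$ for the top $n$ rows of $\Sigma$, $U=(U_1\,|\,U_2)$ with $U_1\in\mathbb{R}^{m\times n}$, $U_2\in\mathbb{R}^{m\times(m-n)}$, and $dU=(dU_1\,|\,dU_2)$ with the same block sizes, $$dU=\bigl(C\Sigma_n^{-1}\,\big|\,-U_1\Sigma_n^{-1}C^\top U_2\bigr),\qquad C=dX\,V-U\,d\Sigma-U\Sigma\, dV^\top V.$$ Consequently, for a scalar function $L$ of $(U,\Sigma,V)$ with partial derivatives $\frac{\partial L}{\partial U},\frac{\partial L}{\partial \Sigma},\frac{\partial L}{\partial V}$, writing $\frac{\partial L}{\partial U}=\left(\left(\frac{\partial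 L}{\partial U}\right)_1\,\middle|\,\left(\frac{\partial L}{\partial U}\right)_2\right)$ with blocks of sizes $m\times n$ and $m\times(m-n)$, the partial derivative of $L\circ f$ (where $f(X)=(U,\Sigma,V)$) with respect to $X$ is $$\frac{\partial L\circ f}{\partial X}=DV^\top+U\left(\frac{\partial L}{\partial \Sigma}-U^\top D\right)_{diag}V^\top+2U\Sigma\left(K^\top\circ\left(V^\top\left(\frac{\partial L}{\partial V}-VD^\top U\Sigma\right)\right)\right)_{sym}V^\top,$$ where $D=\left(\frac{\partial L}{\partial U}\right)_1\Sigma_n^{-1}-U_2\left(\frac{\partial L}{\partial U}\right)_2^\top U_1\Sigma_n^{-1}$.
   Context: Notation: for a square matrix $A$, $A_{sym}=\frac12(A^\top+A)$; for any matrix $A$, $A_{diag}$ is the matrix of the same size equal to $A$ on the main diagonal and $0$ elsewhere; $\circ$ is the Hadamard (entrywise) product; $A:B=\operatorname{Tr}(A^\top B)=\sum_{ij}A_{ij}B_{ij}$. Variations are first-order perturbations: given $dX$, the induced variation of the SVD factors is a triple $(dU,d\Sigma,dV)$ with $d\Sigma$ diagonal (of the same shape as $\Sigma$), $U^\top dU+dU^\top U=0$, $V^\top dV+dV^\top V=0$, and $dX=dU\,\Sigma V^\top+U\,d\Sigma\, V^\top+U\Sigma\, dV^\top$; when $m>n$, the component $U_2^\top dU_2$ (not determined by these conditions) is taken to be $0$. The partial derivative of a scalar function $L$ with respect to a matrix argument $Y$ is the matrix $\frac{\partial L}{\partial Y}$ such that the first-order change of $L$ is $\frac{\partial L}{\partial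 Y}:dY$. The claimed formula for $\frac{\partial L\circ f}{\partial X}$ means: for every $dX$ with induced $(dU,d\Sigma,dV)$, $\frac{\partial L}{\partial U}:dU+\frac{\partial L}{\partial \Sigma}:d\Sigma+\frac{\partial L}{\partial V}:dV=\frac{\partial L\circ f}{\partial X}:dX$. *)

theory Defs
  imports "Jordan_Normal_Form.Matrix"
begin

definition sym_mat :: "real mat \<Rightarrow> real mat" where
  "sym_mat A = (1/2) \<cdot>\<^sub>m (A\<^sup>T + A)"

definition diag_part :: "real mat \<Rightarrow> real mat" where
  "diag_part A = mat (dim_row A) (dim_col A) (\<lambda>(i,j). if i = j then A $$ (i,j) else 0)"

definition hadamard :: "real mat \<Rightarrow> real mat \<Rightarrow> real mat" (infixl \<open>\<circ>\<^sub>h\<close> 70) where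
  "hadamard A B = mat (dim_row A) (dim_col A) (\<lambda>ij. A $$ ij * B $$ ij)"

definition frob :: "real mat \<Rightarrow> real mat \<Rightarrow> real" (infix \<open>:\<^sub>F\<close> 65) where
  "frob A B = (\<Sum>i<dim_row A. \<Sum>j<dim_col A. A $$ (i,j) * B $$ (i,j))"

definition mat_inv :: "real mat \<Rightarrow> real mat" where
  "mat_inv A = (SOME B. B \<in> carrier_mat (dim_row A) (dim_row A) \<and> inverts_mat A B \<and> inverts_mat B A)"

definition col_block :: "real mat \<Rightarrow> nat \<Rightarrow> nat \<Rightarrow> real mat" where
  "col_block A a b = mat (dim_row A) (b - a) (\<lambda>(i,j). A $$ (i, j + a))"

definition row_block :: "real mat \<Rightarrow> nat \<Rightarrow> nat \<Rightarrow> real mat" where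
  "row_block A a b = mat (b - a) (dim_col A) (\<lambda>(i,j). A $$ (i + a, j))"

definition hcat :: "real mat \<Rightarrow> real mat \<Rightarrow> real mat" where
  "hcat A B = mat (dim_row A) (dim_col A + dim_col B)
     (\<lambda>(i,j). if j < dim_col A then A $$ (i,j) else B $$ (i, j - dim_col A))"

definition K_mat :: "nat \<Rightarrow> real mat \<Rightarrow> real mat" where
  "K_mat n S = mat n n (\<lambda>(i,j). if i = j then 0 else 1 / ((S $$ (i,i))^2 - (S $$ (j,j))^2))"

definition induced_variation ::
  "nat \<Rightarrow> nat \<Rightarrow> real mat \<Rightarrow> real mat \<Rightarrow> real mat \<Rightarrow> real mat \<Rightarrow> real mat \<Rightarrow> real mat \<Rightarrow> real mat \<Rightarrow> bool" where
  "induced_variation m n U S V dX dU dS dV \<longleftrightarrow>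
     dU \<in> carrier_mat m m \<and> dS \<in> carrier_mat m n \<and> dV \<in> carrier_mat n n \<and>
     diagonal_mat dS \<and>
     U\<^sup>T * dU + dU\<^sup>T * U = 0\<^sub>m m m \<and>
     V\<^sup>T * dV + dV\<^sup>T * V = 0\<^sub>m n n \<and>
     dX = dU * S * V\<^sup>T + U * dS * V\<^sup>T + U * S * dV\<^sup>T \<and>
     (col_block U n m)\<^sup>T * col_block dU n m = 0\<^sub>m (m - n) (m - n)"

end

theory Submission
  imports Defs "Jordan_Normal_Form.Determinant"
begin

lemma mult_entry:
  assumes "A \<in> carrier_mat a b" "B \<in> carrier_mat b c" "i < a" "j < c"
  shows "(A*B)$$(i,j) = (\<Sum>k<b. A$$(i,k)*B$$(k,j))"
  using assms by (auto simp: scalar_prod_def atLeast0LessThan)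

lemma diag_right:
  assumes "S \<in> carrier_mat q n" "diagonal_mat S" "A \<in> carrier_mat p q" "n \<le> q" "i < p" "j < n"
  shows "(A*S)$$(i,j) = A$$(i,j)*S$$(j,j)"
proof -
  have "(A*S)$$(i,j) = (\<Sum>k<q. A$$(i,k)*S$$(k,j))" using assms by (intro mult_entry) auto
  also have "\<dots> = (\<Sum>k<q. if k = j then A$$(i,j)*S$$(j,j) else 0)"
    using assms by (intro sum.cong) (auto simp: diagonal_mat_def)
  also have "\<dots> = A$$(i,j)*S$$(j,j)" using assms by simp
  finally show ?thesis .
qed

lemma diag_left:
  assumes "S \<in> carrier_mat a b" "diagonal_mat S" "B \<in> carrier_mat b p" "i < a" "j < p"
  shows "(S*B)$$(i,j) = (if i < b then S$$(i,i)*B$$(i,j) else 0)"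
proof -
  have "(S*B)$$(i,j) = (\<Sum>k<b. S$$(i,k)*B$$(k,j))" using assms by (intro mult_entry) auto
  also have "\<dots> = (\<Sum>k<b. if k = i then S$$(i,i)*B$$(i,j) else 0)"
    using assms by (intro sum.cong) (auto simp: diagonal_mat_def)
  also have "\<dots> = (if i < b then S$$(i,i)*B$$(i,j) else 0)" using assms by simp
  finally show ?thesis .
qed

lemma frob_mult_right:
  assumes "A \<in> carrier_mat p q" "B \<in> carrier_mat p r" "C \<in> carrier_mat r q"
  shows "A :\<^sub>F (B*C) = (B\<^sup>T*A) :\<^sub>F C"
proof -
  have [simp]: "dim_row (B\<^sup>T*A) = r" "dim_col (B\<^sup>T*A) = q" using assms by auto
  have "A :\<^sub>F (B*C) = (\<Sum>i<p. \<Sum>j<q. A$$(i,j) * (\<Sum>k<r. B$$(i,k)*C$$(k,j)))"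
    using assms unfolding frob_def by (intro sum.cong) (auto simp: mult_entry[OF assms(2,3)] simp del: index_mult_mat)
  also have "\<dots> = (\<Sum>k<r. \<Sum>j<q. (\<Sum>i<p. B$$(i,k)*A$$(i,j)) * C$$(k,j))"
    by (simp add: sum_distrib_left sum_distrib_right mult_ac sum.swap[of _ "{..<p}"] sum.swap[of _ "{..<q}" "{..<r}"])
  also have "\<dots> = (B\<^sup>T*A) :\<^sub>F C"
    using assms unfolding frob_def by (intro sum.cong refl) (auto simp: mult_entry[of "B\<^sup>T" r p A q] simp del: index_mult_mat)
  finally show ?thesis .
qed

lemma frob_mult_left:
  assumes "A \<in> carrier_mat p q" "B \<in> carrier_mat p r" "C \<in> carrier_mat r q"
  shows "A :\<^sub>F (B*C) = (A*C\<^sup>T) :\<^sub>F B"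
proof -
  have [simp]: "dim_row (A*C\<^sup>T) = p" "dim_col (A*C\<^sup>T) = r" using assms by auto
  have "A :\<^sub>F (B*C) = (\<Sum>i<p. \<Sum>j<q. A$$(i,j) * (\<Sum>k<r. B$$(i,k)*C$$(k,j)))"
    using assms unfolding frob_def by (intro sum.cong) (auto simp: mult_entry[OF assms(2,3)] simp del: index_mult_mat)
  also have "\<dots> = (\<Sum>i<p. \<Sum>k<r. (\<Sum>j<q. A$$(i,j)*C$$(k,j)) * B$$(i,k))"
    by (simp add: sum_distrib_left sum_distrib_right mult_ac sum.swap[of _ "{..<q}" "{..<r}"])
  also have "\<dots> = (A*C\<^sup>T) :\<^sub>F B"
    using assms unfolding frob_def by (intro sum.cong refl) (auto simp: mult_entry[of A p q "C\<^sup>T" r] simp del: index_mult_mat)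
  finally show ?thesis .
qed

lemma frob_transpose:
  assumes "A \<in> carrier_mat q p" "B \<in> carrier_mat p q"
  shows "A :\<^sub>F B\<^sup>T = A\<^sup>T :\<^sub>F B"
  using assms unfolding frob_def
  by (simp add: sum.swap[of _ "{..<q}" "{..<p}"] mult.commute)

lemma frob_comm:
  assumes "A \<in> carrier_mat p q" "B \<in> carrier_mat p q"
  shows "A :\<^sub>F B = B :\<^sub>F A"
  using assms unfolding frob_def by (simp add: mult.commute)

lemma frob_add_left:
  assumes "A \<in> carrier_mat p q" "B \<in> carrier_mat p q" "C \<in> carrier_mat p q"
  shows "(A + B) :\<^sub>F C = (A :\<^sub>F C) + (B :\<^sub>F C)"
  using assms unfolding frob_def by (simp add: sum.distrib[symmetric] algebra_simps)

lemma frob_add_right: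
  assumes "A \<in> carrier_mat p q" "B \<in> carrier_mat p q" "C \<in> carrier_mat p q"
  shows "A :\<^sub>F (B + C) = (A :\<^sub>F B) + (A :\<^sub>F C)"
  using assms unfolding frob_def by (simp add: sum.distrib[symmetric] algebra_simps)

lemma frob_minus_right:
  assumes "A \<in> carrier_mat p q" "B \<in> carrier_mat p q" "C \<in> carrier_mat p q"
  shows "A :\<^sub>F (B - C) = (A :\<^sub>F B) - (A :\<^sub>F C)"
  using assms unfolding frob_def by (simp add: sum_subtractf[symmetric] algebra_simps)

lemma frob_minus_left:
  assumes "A \<in> carrier_mat p q" "B \<in> carrier_mat p q" "C \<in> carrier_mat p q"
  shows "(A - B) :\<^sub>F C = (A :\<^sub>F C) - (B :\<^sub>F C)"
  using assms unfolding frob_def by (simp add: sum_subtractf[symmetric] algebra_simps)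

lemma frob_uminus_right:
  assumes "A \<in> carrier_mat p q" "B \<in> carrier_mat p q"
  shows "A :\<^sub>F (- B) = - (A :\<^sub>F B)"
  using assms unfolding frob_def by (simp add: sum_negf[symmetric])

lemma frob_smult_right:
  assumes "A \<in> carrier_mat p q" "B \<in> carrier_mat p q"
  shows "A :\<^sub>F (c \<cdot>\<^sub>m B) = c * (A :\<^sub>F B)"
  using assms unfolding frob_def by (simp add: sum_distrib_left mult_ac)

lemma frob_smult_left:
  assumes "A \<in> carrier_mat p q" "B \<in> carrier_mat p q"
  shows "(c \<cdot>\<^sub>m A) :\<^sub>F B = c * (A :\<^sub>F B)"
  using assms unfolding frob_def by (simp add: sum_distrib_left mult_ac)

lemma diag_part_carrier[simp]: "A \<in> carrier_mat p q \<Longrightarrow> diag_part A \<in> carrier_mat p q"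
  unfolding diag_part_def by auto

lemma hadamard_carrier[simp]: "A \<in> carrier_mat p q \<Longrightarrow> A \<circ>\<^sub>h B \<in> carrier_mat p q"
  unfolding hadamard_def by auto

lemma sym_mat_carrier[simp]: "A \<in> carrier_mat p p \<Longrightarrow> sym_mat A \<in> carrier_mat p p"
  unfolding sym_mat_def by auto

lemma frob_diag:
  assumes "A \<in> carrier_mat p q" "B \<in> carrier_mat p q"
  shows "A :\<^sub>F diag_part B = diag_part A :\<^sub>F B"
  using assms unfolding frob_def diag_part_def by (intro sum.cong refl) auto

lemma frob_had:
  assumes "A \<in> carrier_mat p q" "B \<in> carrier_mat p q" "K \<in> carrier_mat p q"
  shows "A :\<^sub>F (K \<circ>\<^sub>h B) = (K \<circ>\<^sub>h A) :\<^sub>F B"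
  using assms unfolding frob_def hadamard_def by (intro sum.cong refl) auto

lemma frob_sym:
  assumes "A \<in> carrier_mat p p" "B \<in> carrier_mat p p"
  shows "A :\<^sub>F sym_mat B = sym_mat A :\<^sub>F B"
proof -
  have "A :\<^sub>F sym_mat B = (\<Sum>i<p. \<Sum>j<p. A$$(i,j) * (1/2) * B$$(j,i)) + (\<Sum>i<p. \<Sum>j<p. A$$(i,j) * (1/2) * B$$(i,j))"
    using assms unfolding frob_def sym_mat_def by (simp add: sum.distrib[symmetric] algebra_simps)
  also have "(\<Sum>i<p. \<Sum>j<p. A$$(i,j) * (1/2) * B$$(j,i)) = (\<Sum>i<p. \<Sum>j<p. A$$(j,i) * (1/2) * B$$(i,j))"
    by (rule sum.swap)
  also have "(\<Sum>i<p. \<Sum>j<p. A$$(j,i) * (1/2) * B$$(i,j)) + (\<Sum>i<p. \<Sum>j<p. A$$(i,j) * (1/2) * B$$(i,j))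
     = sym_mat A :\<^sub>F B"
    using assms unfolding frob_def sym_mat_def by (simp add: sum.distrib[symmetric] algebra_simps)
  finally show ?thesis .
qed

lemma frob_hcat:
  assumes "G \<in> carrier_mat p q" "k \<le> q" "A \<in> carrier_mat p k" "B \<in> carrier_mat p (q - k)"
  shows "G :\<^sub>F hcat A B = (col_block G 0 k :\<^sub>F A) + (col_block G k q :\<^sub>F B)"
proof -
  have split: "{..<q} = {..<k} \<union> {k..<q}" using assms by auto
  have [simp]: "dim_row G = p" "dim_col G = q" "dim_row A = p" "dim_col A = k" "dim_row B = p" "dim_col B = q - k"
    using assms by auto
  have row: "(\<Sum>j<q. G$$(i,j) * hcat A B $$ (i,j)) = (\<Sum>j<k. G$$(i,j) * A$$(i,j)) + (\<Sum>j\<in>{k..<q}. G$$(i,j) * B$$(i,j-k))"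
    if "i < p" for i
  proof -
    have "(\<Sum>j<q. G$$(i,j) * hcat A B $$ (i,j)) = (\<Sum>j<k. G$$(i,j) * hcat A B $$ (i,j)) + (\<Sum>j\<in>{k..<q}. G$$(i,j) * hcat A B $$ (i,j))"
      unfolding split by (rule sum.union_disjoint) auto
    also have "(\<Sum>j<k. G$$(i,j) * hcat A B $$ (i,j)) = (\<Sum>j<k. G$$(i,j) * A$$(i,j))"
      using that assms(2) unfolding hcat_def by (intro sum.cong refl) auto
    also have "(\<Sum>j\<in>{k..<q}. G$$(i,j) * hcat A B $$ (i,j)) = (\<Sum>j\<in>{k..<q}. G$$(i,j) * B$$(i,j-k))"
      using that assms(2) unfolding hcat_def by (intro sum.cong refl) auto
    finally show ?thesis .
  qed
  have "G :\<^sub>F hcat A B = (\<Sum>i<p. (\<Sum>j<k. G$$(i,j) * A$$(i,j)) + (\<Sum>j\<in>{k..<q}. G$$(i,j) * B$$(i,j-k)))"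
    unfolding frob_def using row by (intro sum.cong) auto
  also have "\<dots> = (col_block G 0 k :\<^sub>F A) + (col_block G k q :\<^sub>F B)"
    using assms unfolding frob_def col_block_def
    by (simp add: sum.distrib sum.atLeastLessThan_shift_0[of _ k q] atLeast0LessThan add.commute)
  finally show ?thesis .
qed

declare minus_carrier_mat[simp] uminus_carrier_mat[simp]

theorem proposition1:
  fixes m n :: nat and X U S V dX dU dS dV GU GS GV :: "real mat"
  assumes "n \<le> m"
    and "X \<in> carrier_mat m n" and "U \<in> carrier_mat m m" and "S \<in> carrier_mat m n"
    and "V \<in> carrier_mat n n"
    and "U\<^sup>T * U = 1\<^sub>m m" and "V\<^sup>T * V = 1\<^sub>m n"
    and "diagonal_mat S"
    and "\<forall>i<n. S $$ (i,i) \<noteq> 0"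
    and "\<forall>i<n. \<forall>j<n. i \<noteq> j \<longrightarrow> \<bar>S $$ (i,i)\<bar> \<noteq> \<bar>S $$ (j,j)\<bar>"
    and "X = U * S * V\<^sup>T"
    and "dX \<in> carrier_mat m n"
    and "induced_variation m n U S V dX dU dS dV"
    and "GU \<in> carrier_mat m m" and "GS \<in> carrier_mat m n" and "GV \<in> carrier_mat n n"
  shows
    "let K = K_mat n S;
         Sn = row_block S 0 n;
         U1 = col_block U 0 n; U2 = col_block U n m;
         C = dX * V - U * dS - U * S * dV\<^sup>T * V;
         GU1 = col_block GU 0 n; GU2 = col_block GU n m;
         D = GU1 * mat_inv Sn - U2 * GU2\<^sup>T * U1 * mat_inv Sn
     in dS = diag_part (U\<^sup>T * dX * V)
      \<and> dV = 2 \<cdot>\<^sub>m (V * (K\<^sup>T \<circ>\<^sub>h sym_mat (S\<^sup>T * U\<^sup>T * dX * V)))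
      \<and> dU = hcat (C * mat_inv Sn) (- (U1 * mat_inv Sn * C\<^sup>T * U2))
      \<and> (GU :\<^sub>F dU) + (GS :\<^sub>F dS) + (GV :\<^sub>F dV)
          = (D * V\<^sup>T + U * diag_part (GS - U\<^sup>T * D) * V\<^sup>T
             + 2 \<cdot>\<^sub>m (U * S * sym_mat (K\<^sup>T \<circ>\<^sub>h (V\<^sup>T * (GV - V * D\<^sup>T * U * S))) * V\<^sup>T)) :\<^sub>F dX"
proof -
  note nm = assms(1)
  have U: "U \<in> carrier_mat m m" and S: "S \<in> carrier_mat m n" and V: "V \<in> carrier_mat n n"
    and dX: "dX \<in> carrier_mat m n" and GU: "GU \<in> carrier_mat m m" and GS: "GS \<in> carrier_mat m n"
    and GV: "GV \<in> carrier_mat n n" using assms by auto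
  note iv = assms(13)[unfolded induced_variation_def]
  have dU: "dU \<in> carrier_mat m m" and dS: "dS \<in> carrier_mat m n" and dV: "dV \<in> carrier_mat n n"
    and dSd: "diagonal_mat dS" and hU: "U\<^sup>T * dU + dU\<^sup>T * U = 0\<^sub>m m m"
    and hV: "V\<^sup>T * dV + dV\<^sup>T * V = 0\<^sub>m n n"
    and hX: "dX = dU * S * V\<^sup>T + U * dS * V\<^sup>T + U * S * dV\<^sup>T"
    and h2: "(col_block U n m)\<^sup>T * col_block dU n m = 0\<^sub>m (m - n) (m - n)"
    using iv by auto
  have Sd: "diagonal_mat S" using assms(8) .
  define \<sigma> where "\<sigma> i = S $$ (i,i)" for i
  have \<sigma>nz: "\<sigma> i \<noteq> 0" if "i < n" for i using assms(9) that unfolding \<sigma>_def by auto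
  have \<sigma>d: "\<sigma> i ^ 2 \<noteq> \<sigma> j ^ 2" if "i < n" "j < n" "i \<noteq> j" for i j
  proof
    assume "\<sigma> i ^ 2 = \<sigma> j ^ 2"
    hence "\<bar>\<sigma> i\<bar> = \<bar>\<sigma> j\<bar>" by (auto simp: power2_eq_iff)
    thus False using assms(10) that unfolding \<sigma>_def by auto
  qed
  have UUt: "U * U\<^sup>T = 1\<^sub>m m" using mat_mult_left_right_inverse[of "U\<^sup>T" m U] U assms(6) by auto
  have VVt: "V * V\<^sup>T = 1\<^sub>m n" using mat_mult_left_right_inverse[of "V\<^sup>T" n V] V assms(7) by auto
  define Wu where "Wu = U\<^sup>T * dU"
  define Wv where "Wv = V\<^sup>T * dV"
  have Wu: "Wu \<in> carrier_mat m m" unfolding Wu_def using U dU by auto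
  have Wv: "Wv \<in> carrier_mat n n" unfolding Wv_def using V dV by auto
  have dUtU: "(dU\<^sup>T * U) $$ (i,j) = Wu $$ (j,i)" if "i < m" "j < m" for i j
    using that U dU unfolding Wu_def
    by (simp add: mult_entry[of "dU\<^sup>T" m m U m] mult_entry[of "U\<^sup>T" m m dU m] mult.commute del: index_mult_mat)
  have dVtV: "(dV\<^sup>T * V) $$ (i,j) = Wv $$ (j,i)" if "i < n" "j < n" for i j
    using that V dV unfolding Wv_def
    by (simp add: mult_entry[of "dV\<^sup>T" n n V n] mult_entry[of "V\<^sup>T" n n dV n] mult.commute del: index_mult_mat)
  have Wu_as: "Wu $$ (i,j) = - Wu $$ (j,i)" if "i < m" "j < m" for i j
  proof -
    have "(U\<^sup>T * dU + dU\<^sup>T * U) $$ (i,j) = 0" using hU that by simp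
    hence "Wu $$ (i,j) + (dU\<^sup>T * U) $$ (i,j) = 0" using that U dU unfolding Wu_def by simp
    thus ?thesis using dUtU[OF that] by simp
  qed
  have Wv_as: "Wv $$ (i,j) = - Wv $$ (j,i)" if "i < n" "j < n" for i j
  proof -
    have "(V\<^sup>T * dV + dV\<^sup>T * V) $$ (i,j) = 0" using hV that by simp
    hence "Wv $$ (i,j) + (dV\<^sup>T * V) $$ (i,j) = 0" using that V dV unfolding Wv_def by simp
    thus ?thesis using dVtV[OF that] by simp
  qed
  have Wu_0: "Wu $$ (i,i) = 0" if "i < m" for i using Wu_as[OF that that] by simp
  have Wv_0: "Wv $$ (i,i) = 0" if "i < n" for i using Wv_as[OF that that] by simp
  have Wu_blk: "Wu $$ (i,j) = 0" if "n \<le> i" "i < m" "n \<le> j" "j < m" for i j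
  proof -
    have "((col_block U n m)\<^sup>T * col_block dU n m) $$ (i - n, j - n) = 0"
      using h2 that by simp
    moreover have "((col_block U n m)\<^sup>T * col_block dU n m) $$ (i - n, j - n)
        = (\<Sum>k<m. U $$ (k, i) * dU $$ (k, j))"
      using that U dU unfolding col_block_def
      by (subst mult_entry[of _ "m - n" m _ "m - n"]) auto
    moreover have "Wu $$ (i,j) = (\<Sum>k<m. U $$ (k, i) * dU $$ (k, j))"
      using that U dU unfolding Wu_def
      by (subst mult_entry[of _ m m _ m]) auto
    ultimately show ?thesis by simp
  qed
  have dU_eq: "dU = U * Wu"
  proof -
    have "U * Wu = (U * U\<^sup>T) * dU" unfolding Wu_def using U dU by (simp add: assoc_mult_mat[of U m m "U\<^sup>T" m dU m])
    also have "\<dots> = dU" using UUt dU by simp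
    finally show ?thesis by simp
  qed
  have dV_eq: "dV = V * Wv"
  proof -
    have "V * Wv = (V * V\<^sup>T) * dV" unfolding Wv_def using V dV by (simp add: assoc_mult_mat[of V n n "V\<^sup>T" n dV n])
    also have "\<dots> = dV" using VVt dV by simp
    finally show ?thesis by simp
  qed

  have UtU_c: "U\<^sup>T * (U * Y) = Y" if "Y \<in> carrier_mat m k" for Y k
    using that U assms(6) by (simp add: assoc_mult_mat[of "U\<^sup>T" m m U m Y k, symmetric])
  have dVtV_m: "dV\<^sup>T * V = - Wv"
  proof (rule eq_matI)
    fix i j assume "i < dim_row (- Wv)" "j < dim_col (- Wv)"
    hence ij: "i < n" "j < n" using Wv by auto
    show "(dV\<^sup>T * V) $$ (i,j) = (- Wv) $$ (i,j)" using dVtV[OF ij] Wv_as[OF ij(2,1)] ij Wv by simp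
  qed (use Wv V dV in auto)
  have cA: "dU * S * V\<^sup>T \<in> carrier_mat m n" and cB: "U * dS * V\<^sup>T \<in> carrier_mat m n"
    and cC: "U * S * dV\<^sup>T \<in> carrier_mat m n" using U S V dU dS dV by auto
  have e1: "U\<^sup>T*dX*V = U\<^sup>T*(dU * S * V\<^sup>T)*V + U\<^sup>T*(U * dS * V\<^sup>T)*V + U\<^sup>T*(U * S * dV\<^sup>T)*V"
  proof -
    have "U\<^sup>T*dX = U\<^sup>T*(dU * S * V\<^sup>T) + U\<^sup>T*(U * dS * V\<^sup>T) + U\<^sup>T*(U * S * dV\<^sup>T)"
      unfolding hX using cA cB cC U
      by (simp add: mult_add_distrib_mat[where A="U\<^sup>T" and nr=m and n=m and nc=n] assoc_add_mat[where A="U\<^sup>T * (dU * S * V\<^sup>T)" and nr=m and nc=n])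
    thus ?thesis using cA cB cC U V
      by (simp add: add_mult_distrib_mat[where nr=m and n=n and C=V and nc=n])
  qed
  have sand: "U\<^sup>T*(A*V\<^sup>T)*V = U\<^sup>T*A" if A: "A \<in> carrier_mat m n" for A
  proof -
    have "U\<^sup>T*(A*V\<^sup>T)*V = U\<^sup>T*((A*V\<^sup>T)*V)"
      using U V A by (intro assoc_mult_mat[of _ m m _ n _ n]) auto
    also have "(A*V\<^sup>T)*V = A*(V\<^sup>T*V)" using V A by (intro assoc_mult_mat[of _ m n _ n _ n]) auto
    also have "\<dots> = A" using assms(7) A by simp
    finally show ?thesis .
  qed
  have e2: "U\<^sup>T*(dU * S * V\<^sup>T)*V = Wu * S"
    using sand[of "dU*S"] U S dU unfolding Wu_def by (simp add: assoc_mult_mat[of "U\<^sup>T" m m dU m S n])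
  have e3: "U\<^sup>T*(U * dS * V\<^sup>T)*V = dS"
    using sand[of "U*dS"] U dS UtU_c[OF dS] by simp
  have e4: "U\<^sup>T*(U * S * dV\<^sup>T)*V = - (S * Wv)"
  proof -
    have "U\<^sup>T*(U * S * dV\<^sup>T) = (U\<^sup>T*(U * S)) * dV\<^sup>T"
      using U S dV by (intro assoc_mult_mat[symmetric, of _ m m _ n _ n]) auto
    also have "U\<^sup>T*(U * S) = S" using UtU_c[OF S] .
    finally have "U\<^sup>T*(U * S * dV\<^sup>T)*V = S * dV\<^sup>T * V" by simp
    also have "\<dots> = S * (dV\<^sup>T * V)" using S dV V by (intro assoc_mult_mat[of _ m n _ n _ n]) auto
    also have "\<dots> = - (S * Wv)" using dVtV_m S Wv by (simp add: uminus_mult_right_mat)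
    finally show ?thesis .
  qed
  define P where "P = U\<^sup>T * dX * V"
  have P: "P \<in> carrier_mat m n" unfolding P_def using U dX V by auto
  have P_ent: "P $$ (i,j) = Wu $$ (i,j) * \<sigma> j + dS $$ (i,j) - (if i < n then \<sigma> i * Wv $$ (i,j) else 0)"
    if "i < m" "j < n" for i j
  proof -
    have "P = Wu * S + dS + - (S * Wv)" unfolding P_def e1 e2 e3 e4 ..
    hence "P $$ (i,j) = (Wu * S) $$ (i,j) + dS $$ (i,j) - (S * Wv) $$ (i,j)"
      using that Wu S dS Wv by simp
    thus ?thesis using that diag_right[OF S Sd Wu nm] diag_left[OF S Sd Wv] unfolding \<sigma>_def by simp
  qed

  have dS_eq: "dS = diag_part (U\<^sup>T * dX * V)"
  proof (rule eq_matI)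
    fix i j assume "i < dim_row (diag_part (U\<^sup>T * dX * V))" "j < dim_col (diag_part (U\<^sup>T * dX * V))"
    hence ij: "i < m" "j < n" using U dX V by (auto simp: diag_part_def)
    show "dS $$ (i,j) = diag_part (U\<^sup>T * dX * V) $$ (i,j)"
    proof (cases "i = j")
      case True
      thus ?thesis using ij P_ent[OF ij] Wu_0[of i] Wv_0[of j] P unfolding diag_part_def P_def[symmetric]
        by simp
    next
      case False
      thus ?thesis using ij dSd dS U dX V unfolding diag_part_def diagonal_mat_def by simp
    qed
  qed (use dS U dX V in \<open>auto simp: diag_part_def\<close>)
  define M where "M = S\<^sup>T * U\<^sup>T * dX * V"
  have M_P: "M = S\<^sup>T * P"
  proof -
    have "S\<^sup>T * P = S\<^sup>T * (U\<^sup>T * dX * V)" unfolding P_def ..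
    also have "\<dots> = S\<^sup>T * (U\<^sup>T * dX) * V" using S U dX V
      by (intro assoc_mult_mat[symmetric, of _ n m _ n _ n]) auto
    also have "S\<^sup>T * (U\<^sup>T * dX) = S\<^sup>T * U\<^sup>T * dX" using S U dX
      by (intro assoc_mult_mat[symmetric, of _ n m _ m _ n]) auto
    finally show ?thesis unfolding M_def by simp
  qed
  have M: "M \<in> carrier_mat n n" unfolding M_P using S P by auto
  have StD: "diagonal_mat S\<^sup>T" using Sd S unfolding diagonal_mat_def by auto
  have M_ent: "M $$ (i,j) = \<sigma> i * P $$ (i,j)" if "i < n" "j < n" for i j
    unfolding M_P using diag_left[of "S\<^sup>T" n m, OF _ StD P] that S nm unfolding \<sigma>_def by auto
  define K where "K = K_mat n S"
  have K: "K \<in> carrier_mat n n" unfolding K_def K_mat_def by auto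
  have Wv_eq: "Wv = 2 \<cdot>\<^sub>m (K\<^sup>T \<circ>\<^sub>h sym_mat M)"
  proof (rule eq_matI)
    fix i j assume "i < dim_row (2 \<cdot>\<^sub>m (K\<^sup>T \<circ>\<^sub>h sym_mat M))" "j < dim_col (2 \<cdot>\<^sub>m (K\<^sup>T \<circ>\<^sub>h sym_mat M))"
    hence ij: "i < n" "j < n" using K by (auto simp: hadamard_def)
    have r: "(2 \<cdot>\<^sub>m (K\<^sup>T \<circ>\<^sub>h sym_mat M)) $$ (i,j) = 2 * (K $$ (j,i) * ((M $$ (j,i) + M $$ (i,j)) / 2))"
      using ij K M unfolding hadamard_def sym_mat_def by simp
    show "Wv $$ (i,j) = (2 \<cdot>\<^sub>m (K\<^sup>T \<circ>\<^sub>h sym_mat M)) $$ (i,j)"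
    proof (cases "i = j")
      case True
      thus ?thesis unfolding r using Wv_0 ij unfolding K_def K_mat_def by simp
    next
      case False
      have Kji: "K $$ (j,i) = 1 / (\<sigma> j ^ 2 - \<sigma> i ^ 2)" using ij False unfolding K_def K_mat_def \<sigma>_def by simp
      have d0: "dS $$ (i,j) = 0" "dS $$ (j,i) = 0" using dSd dS ij False nm unfolding diagonal_mat_def by auto
      have nz: "\<sigma> j ^ 2 - \<sigma> i ^ 2 \<noteq> 0" using \<sigma>d[of j i] ij False by auto
      have "M $$ (j,i) + M $$ (i,j) = (\<sigma> j ^ 2 - \<sigma> i ^ 2) * Wv $$ (i,j)"
        using M_ent[of j i] M_ent[of i j] P_ent[of j i] P_ent[of i j] ij nm d0 Wu_as[of i j] Wv_as[of i j]
        by (simp add: algebra_simps power2_eq_square)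
      thus ?thesis unfolding r Kji using nz by simp
    qed
  qed (use K M Wv in \<open>auto simp: hadamard_def\<close>)
  have dV_fin: "dV = 2 \<cdot>\<^sub>m (V * (K\<^sup>T \<circ>\<^sub>h sym_mat M))"
    unfolding dV_eq Wv_eq using V K M by (simp add: mult_smult_distrib[of _ n n _ n])

  define Sn where "Sn = row_block S 0 n"
  have Sn: "Sn \<in> carrier_mat n n" unfolding Sn_def row_block_def using S by auto
  have Sn_ent: "Sn $$ (i,j) = S $$ (i,j)" if "i < n" "j < n" for i j
    using that S unfolding Sn_def row_block_def by auto
  have SnD: "diagonal_mat Sn" using Sd Sn Sn_ent S nm unfolding diagonal_mat_def by auto
  define Sd' where "Sd' = mat n n (\<lambda>(i,j). if i = j then 1 / \<sigma> i else 0)"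
  have Sd': "Sd' \<in> carrier_mat n n" unfolding Sd'_def by auto
  have Sd'D: "diagonal_mat Sd'" unfolding Sd'_def diagonal_mat_def by auto
  have Sd'T: "Sd'\<^sup>T = Sd'" unfolding Sd'_def by (rule eq_matI) auto
  have inv1: "Sn * Sd' = 1\<^sub>m n"
  proof (rule eq_matI)
    fix i j assume "i < dim_row (1\<^sub>m n :: real mat)" "j < dim_col (1\<^sub>m n :: real mat)"
    hence ij: "i < n" "j < n" by auto
    show "(Sn * Sd') $$ (i,j) = 1\<^sub>m n $$ (i,j)"
      using diag_left[OF Sn SnD Sd' ij] ij Sn_ent \<sigma>nz unfolding Sd'_def \<sigma>_def by auto
  qed (use Sn Sd' in auto)
  have inv2: "Sd' * Sn = 1\<^sub>m n"
  proof (rule eq_matI)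
    fix i j assume "i < dim_row (1\<^sub>m n :: real mat)" "j < dim_col (1\<^sub>m n :: real mat)"
    hence ij: "i < n" "j < n" by auto
    show "(Sd' * Sn) $$ (i,j) = 1\<^sub>m n $$ (i,j)"
      using diag_left[OF Sd' Sd'D Sn ij] ij Sn_ent \<sigma>nz Sd S nm unfolding Sd'_def \<sigma>_def diagonal_mat_def by auto
  qed (use Sn Sd' in auto)
  have Sinv: "mat_inv Sn = Sd'"
  proof -
    let ?P = "\<lambda>B. B \<in> carrier_mat (dim_row Sn) (dim_row Sn) \<and> inverts_mat Sn B \<and> inverts_mat B Sn"
    have "?P Sd'" using Sd' Sn inv1 inv2 unfolding inverts_mat_def by auto
    hence PB: "?P (mat_inv Sn)" unfolding mat_inv_def by (rule someI)
    define B where "B = mat_inv Sn"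
    have B: "B \<in> carrier_mat n n" and BS: "B * Sn = 1\<^sub>m n" using PB Sn unfolding B_def inverts_mat_def by auto
    have "B = B * (Sn * Sd')" using inv1 B by simp
    also have "\<dots> = (B * Sn) * Sd'" using B Sn Sd' by (simp add: assoc_mult_mat[of B n n Sn n Sd' n])
    also have "\<dots> = Sd'" using BS Sd' by simp
    finally show ?thesis unfolding B_def .
  qed
  have rV: "A * V\<^sup>T * V = A" if A: "A \<in> carrier_mat m n" for A
  proof -
    have "A * V\<^sup>T * V = A * (V\<^sup>T * V)" using A V by (intro assoc_mult_mat[of _ m n _ n _ n]) auto
    thus ?thesis using assms(7) A by simp
  qed
  define C where "C = dX * V - U * dS - U * S * dV\<^sup>T * V"
  have C_eq: "C = dU * S"
  proof -
    have "dX * V = dU * S * V\<^sup>T * V + U * dS * V\<^sup>T * V + U * S * dV\<^sup>T * V"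
      unfolding hX using cA cB cC V
      by (simp add: add_mult_distrib_mat[where nr=m and n=n and C=V and nc=n] assoc_add_mat[where A="dU * S * V\<^sup>T * V" and nr=m and nc=n])
    also have "dU * S * V\<^sup>T * V = dU * S"
      using rV[of "dU * S"] dU S by simp
    also have "U * dS * V\<^sup>T * V = U * dS"
      using rV[of "U * dS"] U dS by simp
    finally have "dX * V = dU * S + U * dS + U * S * dV\<^sup>T * V" .
    thus ?thesis unfolding C_def using dU S U dS dV V by (intro eq_matI) auto
  qed
  have C: "C \<in> carrier_mat m n" unfolding C_eq using dU S by auto
  define U1 where "U1 = col_block U 0 n"
  define U2 where "U2 = col_block U n m"
  have U1: "U1 \<in> carrier_mat m n" unfolding U1_def col_block_def using U by auto
  have U2: "U2 \<in> carrier_mat m (m - n)" unfolding U2_def col_block_def using U by auto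
  define W where "W = Sd' * C\<^sup>T"
  have W: "W \<in> carrier_mat n m" unfolding W_def using Sd' C by auto
  have W_ent: "W $$ (a,l) = dU $$ (l,a)" if "a < n" "l < m" for a l
  proof -
    have "W $$ (a,l) = Sd' $$ (a,a) * C $$ (l,a)"
      unfolding W_def using diag_left[OF Sd' Sd'D _ that(1) that(2), of "C\<^sup>T"] C that by simp
    also have "C $$ (l,a) = dU $$ (l,a) * \<sigma> a"
      unfolding C_eq using diag_right[OF S Sd dU nm that(2,1)] unfolding \<sigma>_def .
    finally show ?thesis using that \<sigma>nz[of a] unfolding Sd'_def by simp
  qed
  have WU2_ent: "(W * U2) $$ (a,jj) = - Wu $$ (a, jj + n)" if "a < n" "jj < m - n" for a jj
  proof -
    have "(W * U2) $$ (a,jj) = (\<Sum>l<m. W $$ (a,l) * U2 $$ (l,jj))"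
      using that W U2 by (intro mult_entry) auto
    also have "\<dots> = (\<Sum>l<m. dU $$ (l,a) * U $$ (l, jj + n))"
      using that W_ent U unfolding U2_def col_block_def by (intro sum.cong refl) (simp add: carrier_matD)
    also have "\<dots> = (dU\<^sup>T * U) $$ (a, jj + n)"
      using that dU U nm by (simp add: mult_entry[of "dU\<^sup>T" m m U m] del: index_mult_mat)
    also have "\<dots> = - Wu $$ (a, jj + n)" using dUtU[of a "jj + n"] Wu_as[of a "jj + n"] that nm by simp
    finally show ?thesis .
  qed
  have dU_fin: "dU = hcat (C * mat_inv Sn) (- (U1 * mat_inv Sn * C\<^sup>T * U2))"
    unfolding Sinv
  proof (rule eq_matI)
    have dims: "dim_row (hcat (C * Sd') (- (U1 * Sd' * C\<^sup>T * U2))) = m"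
       "dim_col (hcat (C * Sd') (- (U1 * Sd' * C\<^sup>T * U2))) = m"
      using C Sd' U1 U2 nm unfolding hcat_def by auto
    thus "dim_row dU = dim_row (hcat (C * Sd') (- (U1 * Sd' * C\<^sup>T * U2)))"
       "dim_col dU = dim_col (hcat (C * Sd') (- (U1 * Sd' * C\<^sup>T * U2)))" using dU by auto
    fix i j assume "i < dim_row (hcat (C * Sd') (- (U1 * Sd' * C\<^sup>T * U2)))"
      "j < dim_col (hcat (C * Sd') (- (U1 * Sd' * C\<^sup>T * U2)))"
    hence ij: "i < m" "j < m" using dims by auto
    show "dU $$ (i,j) = hcat (C * Sd') (- (U1 * Sd' * C\<^sup>T * U2)) $$ (i,j)"
    proof (cases "j < n")
      case True
      have "hcat (C * Sd') (- (U1 * Sd' * C\<^sup>T * U2)) $$ (i,j) = (C * Sd') $$ (i,j)"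
        using ij True C Sd' unfolding hcat_def by simp
      also have "\<dots> = C $$ (i,j) * Sd' $$ (j,j)" using diag_right[OF Sd' Sd'D C _ ij(1) True] by simp
      also have "C $$ (i,j) = dU $$ (i,j) * \<sigma> j"
        unfolding C_eq using diag_right[OF S Sd dU nm ij(1) True] unfolding \<sigma>_def .
      finally show ?thesis using True \<sigma>nz[of j] unfolding Sd'_def by simp
    next
      case False
      define jj where "jj = j - n"
      have jj: "jj < m - n" "j = jj + n" using False ij unfolding jj_def by auto
      have "U1 * Sd' * C\<^sup>T * U2 = U1 * W * U2" unfolding W_def using U1 Sd' C
        by (simp add: assoc_mult_mat[of U1 m n Sd' n "C\<^sup>T" m])
      also have "\<dots> = U1 * (W * U2)" using U1 W U2 by (simp add: assoc_mult_mat[of U1 m n W m U2 "m - n"])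
      finally have e: "U1 * Sd' * C\<^sup>T * U2 = U1 * (W * U2)" .
      have "hcat (C * Sd') (- (U1 * Sd' * C\<^sup>T * U2)) $$ (i,j) = - (U1 * (W * U2)) $$ (i, jj)"
        using ij False C Sd' U1 U2 W jj unfolding hcat_def e by simp
      also have "(U1 * (W * U2)) $$ (i, jj) = (\<Sum>a<n. U1 $$ (i,a) * (W * U2) $$ (a,jj))"
        using ij jj U1 W U2 by (intro mult_entry) auto
      also have "\<dots> = (\<Sum>a<n. - (U $$ (i,a) * Wu $$ (a, j)))"
        using ij jj WU2_ent U unfolding U1_def col_block_def by (intro sum.cong refl) (simp add: carrier_matD)
      finally have r: "hcat (C * Sd') (- (U1 * Sd' * C\<^sup>T * U2)) $$ (i,j) = (\<Sum>a<n. U $$ (i,a) * Wu $$ (a, j))"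
        by (simp add: sum_negf)
      have "dU $$ (i,j) = (\<Sum>k<m. U $$ (i,k) * Wu $$ (k,j))"
        unfolding dU_eq using U Wu ij by (intro mult_entry) auto
      also have "\<dots> = (\<Sum>k<n. U $$ (i,k) * Wu $$ (k,j)) + (\<Sum>k\<in>{n..<m}. U $$ (i,k) * Wu $$ (k,j))"
      proof -
        have e: "{..<m} = {..<n} \<union> {n..<m}" using nm by auto
        have "(\<Sum>k\<in>{..<n} \<union> {n..<m}. U $$ (i,k) * Wu $$ (k,j)) = (\<Sum>k<n. U $$ (i,k) * Wu $$ (k,j)) + (\<Sum>k\<in>{n..<m}. U $$ (i,k) * Wu $$ (k,j))"
          by (rule sum.union_disjoint) auto
        thus ?thesis unfolding e .
      qed
      also have "(\<Sum>k\<in>{n..<m}. U $$ (i,k) * Wu $$ (k,j)) = 0"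
        using Wu_blk ij False by (intro sum.neutral) auto
      finally show ?thesis using r by simp
    qed
  qed

  define GU1 where "GU1 = col_block GU 0 n"
  define GU2 where "GU2 = col_block GU n m"
  have GU1: "GU1 \<in> carrier_mat m n" unfolding GU1_def col_block_def using GU by auto
  have GU2: "GU2 \<in> carrier_mat m (m - n)" unfolding GU2_def col_block_def using GU by auto
  define E where "E = U2 * GU2\<^sup>T * U1 * Sd'"
  define D where "D = GU1 * Sd' - E"
  have E: "E \<in> carrier_mat m n" unfolding E_def using U2 GU2 U1 Sd' by auto
  have D: "D \<in> carrier_mat m n" unfolding D_def using GU1 Sd' E by auto
  have f3: "GU2 :\<^sub>F (- (U1 * Sd' * C\<^sup>T * U2)) = - (E :\<^sub>F C)"
  proof -
    have c1: "U1 * Sd' * C\<^sup>T \<in> carrier_mat m m" using U1 Sd' C by auto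
    have c2: "GU2 * U2\<^sup>T \<in> carrier_mat m m" using GU2 U2 by auto
    have c3: "U1 * Sd' \<in> carrier_mat m n" using U1 Sd' by auto
    have "GU2 :\<^sub>F (- (U1 * Sd' * C\<^sup>T * U2)) = - (GU2 :\<^sub>F (U1 * Sd' * C\<^sup>T * U2))"
      using GU2 c1 U2 by (intro frob_uminus_right) auto
    also have "GU2 :\<^sub>F (U1 * Sd' * C\<^sup>T * U2) = (GU2 * U2\<^sup>T) :\<^sub>F (U1 * Sd' * C\<^sup>T)"
      by (rule frob_mult_left[OF GU2 c1 U2])
    also have "\<dots> = ((U1 * Sd')\<^sup>T * (GU2 * U2\<^sup>T)) :\<^sub>F C\<^sup>T"
      by (rule frob_mult_right[OF c2 c3]) (use C in auto)
    also have "\<dots> = ((U1 * Sd')\<^sup>T * (GU2 * U2\<^sup>T))\<^sup>T :\<^sub>F C"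
      by (rule frob_transpose[OF _ C]) (use c3 c2 in auto)
    also have "((U1 * Sd')\<^sup>T * (GU2 * U2\<^sup>T))\<^sup>T = (GU2 * U2\<^sup>T)\<^sup>T * (U1 * Sd')"
      using transpose_mult[of "(U1 * Sd')\<^sup>T" n m "GU2 * U2\<^sup>T" m] c3 c2 by auto
    also have "(GU2 * U2\<^sup>T)\<^sup>T = U2 * GU2\<^sup>T"
      using transpose_mult[of GU2 m "m - n" "U2\<^sup>T" m] GU2 U2 by auto
    also have "U2 * GU2\<^sup>T * (U1 * Sd') = E" unfolding E_def
      using U2 GU2 U1 Sd' by (intro assoc_mult_mat[symmetric, of _ m m _ n _ n]) auto
    finally show ?thesis .
  qed
  have f1: "GU :\<^sub>F dU = D :\<^sub>F C"
  proof -
    have "GU :\<^sub>F dU = (GU1 :\<^sub>F (C * Sd')) + (GU2 :\<^sub>F (- (U1 * Sd' * C\<^sup>T * U2)))"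
      unfolding dU_fin Sinv GU1_def GU2_def
      by (rule frob_hcat[OF GU nm]) (use C Sd' U1 U2 in \<open>auto simp: U1_def U2_def\<close>)
    also have "GU1 :\<^sub>F (C * Sd') = (GU1 * Sd') :\<^sub>F C"
      using frob_mult_left[OF GU1 C Sd'] Sd'T by simp
    finally show ?thesis unfolding f3 D_def using GU1 Sd' E C by (simp add: frob_minus_left[of _ m n])
  qed
  have f5: "D :\<^sub>F C = ((D * V\<^sup>T) :\<^sub>F dX) - ((U\<^sup>T * D) :\<^sub>F dS) - ((V * D\<^sup>T * U * S) :\<^sub>F dV)"
  proof -
    have c1: "U * S * dV\<^sup>T \<in> carrier_mat m n" using cC .
    have c2: "U * S \<in> carrier_mat m n" using U S by auto
    have c3: "D * V\<^sup>T \<in> carrier_mat m n" using D V by auto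
    have "D :\<^sub>F C = (D :\<^sub>F (dX * V)) - (D :\<^sub>F (U * dS)) - (D :\<^sub>F (U * S * dV\<^sup>T * V))"
    proof -
      have x1: "dX * V \<in> carrier_mat m n" "U * dS \<in> carrier_mat m n" "U * S * dV\<^sup>T * V \<in> carrier_mat m n"
        using dX V U dS c1 by auto
      have x2: "dX * V - U * dS \<in> carrier_mat m n" using x1 by auto
      show ?thesis unfolding C_def frob_minus_right[OF D x2 x1(3)] frob_minus_right[OF D x1(1,2)] ..
    qed
    also have "D :\<^sub>F (dX * V) = (D * V\<^sup>T) :\<^sub>F dX" by (rule frob_mult_left[OF D dX V])
    also have "D :\<^sub>F (U * dS) = (U\<^sup>T * D) :\<^sub>F dS" by (rule frob_mult_right[OF D U dS])
    also have "D :\<^sub>F (U * S * dV\<^sup>T * V) = (V * D\<^sup>T * U * S) :\<^sub>F dV"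
    proof -
      have "D :\<^sub>F (U * S * dV\<^sup>T * V) = (D * V\<^sup>T) :\<^sub>F (U * S * dV\<^sup>T)" by (rule frob_mult_left[OF D c1 V])
      also have "\<dots> = ((U * S)\<^sup>T * (D * V\<^sup>T)) :\<^sub>F dV\<^sup>T" by (rule frob_mult_right[OF c3 c2]) (use dV in auto)
      also have "\<dots> = ((U * S)\<^sup>T * (D * V\<^sup>T))\<^sup>T :\<^sub>F dV" by (rule frob_transpose[OF _ dV]) (use c2 c3 in auto)
      also have "((U * S)\<^sup>T * (D * V\<^sup>T))\<^sup>T = (D * V\<^sup>T)\<^sup>T * (U * S)"
        using transpose_mult[of "(U * S)\<^sup>T" n m "D * V\<^sup>T" n] c2 c3 by auto
      also have "(D * V\<^sup>T)\<^sup>T = V * D\<^sup>T" using transpose_mult[of D m n "V\<^sup>T" n] D V by auto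
      also have "V * D\<^sup>T * (U * S) = V * D\<^sup>T * U * S"
        using V D U S by (intro assoc_mult_mat[symmetric, of _ n m _ m _ n]) auto
      finally show ?thesis .
    qed
    finally show ?thesis .
  qed
  define Dg where "Dg = diag_part (GS - U\<^sup>T * D)"
  have GSD: "GS - U\<^sup>T * D \<in> carrier_mat m n" using GS U D by auto
  have Dg: "Dg \<in> carrier_mat m n" unfolding Dg_def using GSD by simp
  have f7: "(GS - U\<^sup>T * D) :\<^sub>F dS = (U * Dg * V\<^sup>T) :\<^sub>F dX"
  proof -
    have "(GS - U\<^sup>T * D) :\<^sub>F dS = Dg :\<^sub>F P" unfolding dS_eq Dg_def P_def[symmetric]
      by (rule frob_diag[OF GSD P])
    also have "\<dots> = (Dg * V\<^sup>T) :\<^sub>F (U\<^sup>T * dX)" unfolding P_def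
      by (rule frob_mult_left[OF Dg _ V]) (use U dX in auto)
    also have "\<dots> = (U\<^sup>T\<^sup>T * (Dg * V\<^sup>T)) :\<^sub>F dX"
      by (rule frob_mult_right[OF _ _ dX]) (use Dg V U in auto)
    also have "U\<^sup>T\<^sup>T * (Dg * V\<^sup>T) = U * Dg * V\<^sup>T"
      unfolding transpose_transpose using U Dg V by (intro assoc_mult_mat[symmetric, of _ m m _ n _ n]) auto
    finally show ?thesis .
  qed
  define Gw where "Gw = GV - V * D\<^sup>T * U * S"
  have Gw: "Gw \<in> carrier_mat n n" unfolding Gw_def using GV V D U S by auto
  define Y where "Y = sym_mat (K\<^sup>T \<circ>\<^sub>h (V\<^sup>T * Gw))"
  have Y: "Y \<in> carrier_mat n n" unfolding Y_def using K by simp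
  have f8: "Gw :\<^sub>F dV = 2 * ((U * S * Y * V\<^sup>T) :\<^sub>F dX)"
  proof -
    have H: "K\<^sup>T \<circ>\<^sub>h sym_mat M \<in> carrier_mat n n" using K by simp
    have VH: "V * (K\<^sup>T \<circ>\<^sub>h sym_mat M) \<in> carrier_mat n n" using V H by auto
    have c1: "S\<^sup>T * U\<^sup>T * dX \<in> carrier_mat n n" using S U dX by auto
    have c2: "S\<^sup>T * U\<^sup>T \<in> carrier_mat n m" using S U by auto
    have "Gw :\<^sub>F dV = 2 * (Gw :\<^sub>F (V * (K\<^sup>T \<circ>\<^sub>h sym_mat M)))"
      unfolding dV_fin by (rule frob_smult_right[OF Gw VH])
    also have "Gw :\<^sub>F (V * (K\<^sup>T \<circ>\<^sub>h sym_mat M)) = (V\<^sup>T * Gw) :\<^sub>F (K\<^sup>T \<circ>\<^sub>h sym_mat M)"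
      by (rule frob_mult_right[OF Gw V H])
    also have "\<dots> = (K\<^sup>T \<circ>\<^sub>h (V\<^sup>T * Gw)) :\<^sub>F sym_mat M"
      by (rule frob_had) (use V Gw M K in auto)
    also have "\<dots> = Y :\<^sub>F M" unfolding Y_def
      by (rule frob_sym[OF _ M]) (use K in simp)
    also have "\<dots> = (Y * V\<^sup>T) :\<^sub>F (S\<^sup>T * U\<^sup>T * dX)" unfolding M_def
      by (rule frob_mult_left[OF Y c1 V])
    also have "\<dots> = ((S\<^sup>T * U\<^sup>T)\<^sup>T * (Y * V\<^sup>T)) :\<^sub>F dX"
      by (rule frob_mult_right[OF _ c2 dX]) (use Y V in auto)
    also have "(S\<^sup>T * U\<^sup>T)\<^sup>T = U * S" using transpose_mult[of "S\<^sup>T" n m "U\<^sup>T" m] S U by auto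
    also have "U * S * (Y * V\<^sup>T) = U * S * Y * V\<^sup>T"
      using U S Y V by (intro assoc_mult_mat[symmetric, of _ m n _ n _ n]) auto
    finally show ?thesis .
  qed
  have fin: "(GU :\<^sub>F dU) + (GS :\<^sub>F dS) + (GV :\<^sub>F dV)
          = (D * V\<^sup>T + U * Dg * V\<^sup>T + 2 \<cdot>\<^sub>m (U * S * Y * V\<^sup>T)) :\<^sub>F dX"
  proof -
    have a1: "D * V\<^sup>T \<in> carrier_mat m n" "U * Dg * V\<^sup>T \<in> carrier_mat m n" "U * S * Y * V\<^sup>T \<in> carrier_mat m n"
      using D V U Dg S Y by auto
    have r: "(D * V\<^sup>T + U * Dg * V\<^sup>T + 2 \<cdot>\<^sub>m (U * S * Y * V\<^sup>T)) :\<^sub>F dX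
       = ((D * V\<^sup>T) :\<^sub>F dX) + ((U * Dg * V\<^sup>T) :\<^sub>F dX) + 2 * ((U * S * Y * V\<^sup>T) :\<^sub>F dX)"
      using a1 dX by (simp add: frob_add_left[of _ m n] frob_smult_left[of _ m n])
    have g1: "(GS - U\<^sup>T * D) :\<^sub>F dS = (GS :\<^sub>F dS) - ((U\<^sup>T * D) :\<^sub>F dS)"
      using GS U D dS by (intro frob_minus_left[of _ m n]) auto
    have g2: "Gw :\<^sub>F dV = (GV :\<^sub>F dV) - ((V * D\<^sup>T * U * S) :\<^sub>F dV)"
      unfolding Gw_def using GV V D U S dV by (intro frob_minus_left[of _ n n]) auto
    show ?thesis unfolding r f1 f5 using f7 f8 g1 g2 by linarith
  qed
  have final: "dS = diag_part (U\<^sup>T * dX * V)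
      \<and> dV = 2 \<cdot>\<^sub>m (V * (K\<^sup>T \<circ>\<^sub>h sym_mat (S\<^sup>T * U\<^sup>T * dX * V)))
      \<and> dU = hcat (C * mat_inv Sn) (- (U1 * mat_inv Sn * C\<^sup>T * U2))
      \<and> (GU :\<^sub>F dU) + (GS :\<^sub>F dS) + (GV :\<^sub>F dV)
          = (D * V\<^sup>T + U * diag_part (GS - U\<^sup>T * D) * V\<^sup>T
             + 2 \<cdot>\<^sub>m (U * S * sym_mat (K\<^sup>T \<circ>\<^sub>h (V\<^sup>T * (GV - V * D\<^sup>T * U * S))) * V\<^sup>T)) :\<^sub>F dX"
    using dS_eq dV_fin dU_fin fin unfolding M_def Dg_def Y_def Gw_def by blast
  show ?thesis using final unfolding Let_def K_def Sn_def U1_def U2_def C_def GU1_def GU2_def D_def E_def Sinv[symmetric]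
    by blast
qed

end
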